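(* Let $m\ge1$ and let $\mathcal{G}=\mathbb{Z}/2^m\mathbb{Z}$ (additive group). Let $e_1,\dots,e_t$ be a sequence of $t$ nonzero elements of $\mathcal{G}$ (repetitions allowed), and let \[ \mathcal{S}=\Big\{\sum_{j=1}^t\delta_je_j:\ \delta_j\in\{-1,0,1\}\Big\}\subseteq\mathcal{G}. \] (i) If $t\ge 2^{m-1}$, then $\overline{2^{m-1}}\in\mathcal{S}$. (ii) If $t=2^{m-1}-1$, then $\overline{2^{m-1}}\notin\mathcal{S}$ if and only if there exists $e\in(\mathbb{Z}/2^m\mathbb{Z})^*$ such that for each $j$, $e_j\equiv e$ or $e_j\equiv -e\pmod{2^m}$.
   Context: $\overline{i}$ denotes the residue class of $i$ modulo $2^m$. *)

theory Defs
  imports "HOL-Number_Theory.Cong"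
begin

definition signed_sums :: "nat \<Rightarrow> nat \<Rightarrow> (nat \<Rightarrow> int) \<Rightarrow> int set" where
  "signed_sums m t e =
     {(\<Sum>j\<in>{1..t}. \<delta> j * e j) mod 2^m | \<delta>. \<forall>j\<in>{1..t}. \<delta> j \<in> {-1, 0, 1}}"

end

theory Submission imports Defs begin

lemma two_adic: "0 < (r::nat) \<Longrightarrow> \<exists>a v. r = 2^a * v \<and> odd v"
proof (induction r rule: less_induct)
  case (less r)
  show ?case
  proof (cases "odd r")
    case True then show ?thesis by (rule_tac x=0 in exI) auto
  next
    case False
    then obtain r' where r': "r = 2*r'" by blast
    with less.prems have "r' < r" "0 < r'" by auto
    from less.IH[OF this] obtain a v where "r' = 2^a*v" "odd v" by blast
    with r' show ?thesis by (rule_tac x="Suc a" in exI) auto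
  qed
qed

lemma lem_two:
  fixes x :: int
  assumes "m \<ge> 1" "(2^m::int) dvd 2*x"
  shows "(2^m::int) dvd x \<or> (2^m::int) dvd (x - 2^(m-1))"
proof -
  have e: "(2^m::int) = 2*2^(m-1)" using assms(1) by (cases m) auto
  then have "(2^(m-1)::int) dvd x" using assms(2) by auto
  then obtain k where k: "x = 2^(m-1)*k" by blast
  show ?thesis
  proof (cases "even k")
    case True then obtain l where "k = 2*l" by blast
    then show ?thesis using k e by (simp add: mult.assoc)
  next
    case False then obtain l where "k = 2*l+1" by (metis oddE)
    then have "x - 2^(m-1) = 2^m * l" using k e by (simp add: algebra_simps)
    then show ?thesis by simp
  qed
qed

lemma half_mod:
  fixes v :: int
  assumes "m \<ge> 1" "odd v"
  shows "(2^(m-1) * v) mod 2^m = 2^(m-1)"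
proof -
  have e: "(2^m::int) = 2*2^(m-1)" using assms(1) by (cases m) auto
  obtain q where "v = 2*q+1" using assms(2) by (metis oddE)
  then have "2^(m-1)*v = 2^(m-1) + 2^m * q" using e by (simp add: algebra_simps)
  then show ?thesis using e by simp
qed

lemma hits_half:
  fixes e :: int
  assumes "m \<ge> 1" "e mod 2^m \<noteq> 0"
  shows "\<exists>k::nat. (int k * e) mod 2^m = 2^(m-1)"
proof -
  define r where "r = nat (e mod 2^m)"
  have ge: "e mod 2^m \<ge> 0" "e mod 2^m < 2^m" by simp_all
  have "0 < e mod 2^m" using ge(1) assms(2) by linarith
  then have r0: "0 < r" "int r = e mod 2^m" unfolding r_def by auto
  obtain a v where av: "r = 2^a*v" "odd v" using two_adic[OF r0(1)] by blast
  have "int r < 2^m" using r0(2) ge by linarith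
  then have "r < 2^m" by (metis of_nat_less_iff of_nat_numeral of_nat_power)
  moreover have "v \<ge> 1" using av(2) by (cases v) auto
  then have "2^a \<le> r" using av(1) by simp
  ultimately have "2^a < (2::nat)^m" by linarith
  then have "a < m" by (simp add: power_strict_increasing_iff)
  then have am: "a \<le> m - 1" by arith
  define k where "k = (2::nat)^(m-1-a)"
  have "(int k * e) mod 2^m = (int k * (e mod 2^m)) mod 2^m" by (simp add: mod_mult_right_eq)
  also have "int k * (e mod 2^m) = 2^(m-1-a) * (2^a * int v)" using r0(2) av(1) unfolding k_def by simp
  also have "(2::int)^(m-1-a) * 2^a = 2^(m-1)" using am by (simp add: power_add[symmetric])
  then have "(2::int)^(m-1-a) * (2^a * int v) = 2^(m-1) * int v" by (metis mult.assoc)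
  also have "(2^(m-1) * int v) mod 2^m = 2^(m-1)" using half_mod assms(1) av(2) by simp
  finally show ?thesis by blast
qed

definition ssJ :: "nat \<Rightarrow> (nat \<Rightarrow> int) \<Rightarrow> nat set \<Rightarrow> int set" where
  "ssJ m e J = {(\<Sum>j\<in>J. \<delta> j * e j) mod 2^m | \<delta>. \<forall>j\<in>J. \<delta> j \<in> {-1, 0, 1}}"

lemma ss_range: "x \<in> ssJ m e J \<Longrightarrow> 0 \<le> x \<and> x < 2^m"
  unfolding ssJ_def by auto

lemma ss_subset: "ssJ m e J \<subseteq> {0..<2^m}"
  using ss_range by (meson atLeastLessThan_iff subsetI)

lemma ss_finite: "finite (ssJ m e J)"
  by (rule finite_subset[OF ss_subset]) simp

lemma ss_zero: "0 \<in> ssJ m e J"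
  unfolding ssJ_def by (rule CollectI, rule exI[of _ "\<lambda>_. 0"]) simp

lemma ss_neg: "x \<in> ssJ m e J \<Longrightarrow> (-x) mod 2^m \<in> ssJ m e J"
proof -
  assume "x \<in> ssJ m e J"
  then obtain \<delta> where d: "x = (\<Sum>j\<in>J. \<delta> j * e j) mod 2^m" "\<forall>j\<in>J. \<delta> j \<in> {-1, 0, 1}"
    unfolding ssJ_def by blast
  have "(-x) mod 2^m = (\<Sum>j\<in>J. (- \<delta> j) * e j) mod 2^m"
    using d(1) by (simp add: mod_minus_eq sum_negf)
  moreover have "\<forall>j\<in>J. - \<delta> j \<in> {-1, 0, 1}" using d(2) by auto
  ultimately show ?thesis unfolding ssJ_def by (auto intro!: exI[of _ "\<lambda>j. - \<delta> j"])
qed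

lemma ss_insert:
  assumes "finite J" "j \<notin> J" "x \<in> ssJ m e J" "d \<in> {-1,0,1}"
  shows "(x + d * e j) mod 2^m \<in> ssJ m e (insert j J)"
proof -
  obtain \<delta> where dl: "x = (\<Sum>i\<in>J. \<delta> i * e i) mod 2^m" "\<forall>i\<in>J. \<delta> i \<in> {-1, 0, 1}"
    using assms(3) unfolding ssJ_def by blast
  define \<delta>' where "\<delta>' = \<delta>(j := d)"
  have "(\<Sum>i\<in>insert j J. \<delta>' i * e i) = d * e j + (\<Sum>i\<in>J. \<delta>' i * e i)"
    using assms(1,2) unfolding \<delta>'_def by simp
  also have "(\<Sum>i\<in>J. \<delta>' i * e i) = (\<Sum>i\<in>J. \<delta> i * e i)"
    using assms(2) unfolding \<delta>'_def by (intro sum.cong) auto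
  finally have "(x + d * e j) mod 2^m = (\<Sum>i\<in>insert j J. \<delta>' i * e i) mod 2^m"
    using dl(1) by (simp add: mod_add_right_eq add.commute)
  moreover have "\<forall>i\<in>insert j J. \<delta>' i \<in> {-1, 0, 1}" using dl(2) assms(4) unfolding \<delta>'_def by auto
  ultimately show ?thesis unfolding ssJ_def by blast
qed

lemma ss_mono_insert:
  assumes "finite J" "j \<notin> J"
  shows "ssJ m e J \<subseteq> ssJ m e (insert j J)"
proof
  fix x assume x: "x \<in> ssJ m e J"
  have "(x + 0 * e j) mod 2^m \<in> ssJ m e (insert j J)" by (rule ss_insert[OF assms x]) simp
  moreover have "(x + 0 * e j) mod 2^m = x" using ss_range[OF x] by simp
  ultimately show "x \<in> ssJ m e (insert j J)" by simp
qed

lemma growth: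
  fixes e :: int and T T' :: "int set"
  assumes m: "m \<ge> 1"
    and T: "T \<subseteq> {0..<2^m}" "0 \<in> T" "\<forall>x\<in>T. (-x) mod 2^m \<in> T"
    and e: "e mod 2^m \<noteq> 0"
    and T': "T \<subseteq> T'" "\<forall>x\<in>T. (x+e) mod 2^m \<in> T'" "\<forall>x\<in>T. (x-e) mod 2^m \<in> T'"
      "finite T'" "2^(m-1) \<notin> T'"
  shows "card T + 2 \<le> card T'"
proof -
  have "\<exists>x\<in>T. (x+e) mod 2^m \<notin> T"
  proof (rule ccontr)
    assume "\<not> ?thesis"
    then have cl: "\<forall>x\<in>T. (x+e) mod 2^m \<in> T" by blast
    have "\<forall>k::nat. (int k * e) mod 2^m \<in> T"
    proof
      fix k :: nat show "(int k * e) mod 2^m \<in> T"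
      proof (induction k)
        case 0 then show ?case using T(2) by simp
      next
        case (Suc k)
        then have "((int k * e) mod 2^m + e) mod 2^m \<in> T" using cl by blast
        moreover have "((int k * e) mod 2^m + e) mod 2^m = (int (Suc k) * e) mod 2^m"
          by (simp add: mod_add_right_eq distrib_right add.commute)
        ultimately show ?case by simp
      qed
    qed
    moreover obtain k where "(int k * e) mod 2^m = 2^(m-1)" using hits_half[OF m e] by blast
    ultimately show False using T'(1,5) by (metis subsetD)
  qed
  then obtain x where x: "x \<in> T" "(x+e) mod 2^m \<notin> T" by blast
  define p where "p = (x+e) mod 2^m"
  define p' where "p' = (-p) mod 2^m"
  have pT': "p \<in> T'" using T'(2) x(1) unfolding p_def by blast
  have "p' = ((-x) mod 2^m - e) mod 2^m" unfolding p'_def p_def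
    by (simp add: mod_diff_left_eq mod_minus_eq) 
  then have p'T': "p' \<in> T'" using T'(3) T(3) x(1) by blast
  have pr: "0 \<le> p" "p < 2^m" unfolding p_def by simp_all
  have p'nT: "p' \<notin> T"
  proof
    assume "p' \<in> T"
    then have "(-p') mod 2^m \<in> T" using T(3) by blast
    moreover have "(-p') mod 2^m = p" unfolding p'_def using pr by (simp add: mod_minus_eq)
    ultimately show False using x(2) unfolding p_def by simp
  qed
  have pp': "p \<noteq> p'"
  proof
    assume "p = p'"
    then have "p mod 2^m = (-p) mod 2^m" using pr unfolding p'_def by simp
    then have "(2^m::int) dvd (p - (-p))" by (simp add: mod_eq_dvd_iff)
    then have "(2^m::int) dvd 2*p" by simp
    then have "(2^m::int) dvd p \<or> (2^m::int) dvd (p - 2^(m-1))" using lem_two m by blast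
    moreover have "m - 1 < m" using m by arith
    then have "(2^(m-1)::int) < 2^m" by simp
    ultimately have "p = 0 \<or> p = 2^(m-1)"
    proof (elim disjE)
      assume "(2^m::int) dvd p" "(2^(m-1)::int) < 2^m"
      then show ?thesis using pr dvd_imp_le_int[of p "2^m"] by (smt (verit))
    next
      assume "(2^m::int) dvd (p - 2^(m-1))" "(2^(m-1)::int) < 2^m"
      moreover have "(0::int) \<le> 2^(m-1)" by simp
      ultimately show ?thesis using pr dvd_imp_le_int[of "p - 2^(m-1)" "2^m"] by (smt (verit))
    qed
    then show False using T(2) x(2) pT' T'(5) unfolding p_def by auto
  qed
  have "insert p (insert p' T) \<subseteq> T'" using pT' p'T' T'(1) by blast
  then have "card (insert p (insert p' T)) \<le> card T'" using T'(4) card_mono by blast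
  moreover have "card (insert p (insert p' T)) = card T + 2"
    using pp' p'nT x(2) finite_subset[OF T'(1) T'(4)] unfolding p_def[symmetric] by simp
  ultimately show ?thesis by simp
qed

lemma count:
  assumes "finite J" "m \<ge> 1"
  shows "(\<forall>j\<in>J. e j mod 2^m \<noteq> 0) \<longrightarrow> 2^(m-1) \<notin> ssJ m e J \<longrightarrow> 2*card J + 1 \<le> card (ssJ m e J)"
  using assms(1)
proof (induction J rule: finite_induct)
  case empty
  have "ssJ m e {} \<noteq> {}" using ss_zero by blast
  then show ?case using ss_finite by (simp add: card_gt_0_iff Suc_leI)
next
  case (insert j J)
  show ?case
  proof (intro impI)
    assume a: "\<forall>i\<in>insert j J. e i mod 2^m \<noteq> 0" "2^(m-1) \<notin> ssJ m e (insert j J)"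
    have sub: "ssJ m e J \<subseteq> ssJ m e (insert j J)" using ss_mono_insert insert(1,2) by blast
    then have "2^(m-1) \<notin> ssJ m e J" using a(2) by blast
    then have ih: "2*card J + 1 \<le> card (ssJ m e J)" using insert(3) a(1) by auto
    have "card (ssJ m e J) + 2 \<le> card (ssJ m e (insert j J))"
    proof (rule growth[OF assms(2) ss_subset ss_zero _ _ sub _ _ ss_finite a(2)])
      show "\<forall>x\<in>ssJ m e J. (-x) mod 2^m \<in> ssJ m e J" using ss_neg by blast
      show "e j mod 2^m \<noteq> 0" using a(1) by simp
      show "\<forall>x\<in>ssJ m e J. (x + e j) mod 2^m \<in> ssJ m e (insert j J)"
        using ss_insert[OF insert(1,2), of _ m e 1] by simp
      show "\<forall>x\<in>ssJ m e J. (x - e j) mod 2^m \<in> ssJ m e (insert j J)"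
        using ss_insert[OF insert(1,2), of _ m e "-1"] by simp
    qed
    then show "2 * card (insert j J) + 1 \<le> card (ssJ m e (insert j J))" using ih insert(1,2) by simp
  qed
qed

lemma five: "(2^m::int) dvd 5*x \<Longrightarrow> (2^m::int) dvd x"
proof -
  assume a: "(2^m::int) dvd 5*x"
  have "coprime (2::int) 5" by simp
  then have "coprime ((2::int)^m) 5" by simp
  then show ?thesis using a by (simp add: coprime_dvd_mult_right_iff)
qed

lemma zeq: "(a*x + b*y) mod (n::int) = (a'*x + b'*y) mod n \<Longrightarrow> n dvd ((a-a')*x + (b-b')*y)"
proof -
  assume "(a*x + b*y) mod (n::int) = (a'*x + b'*y) mod n"
  then have "n dvd ((a*x + b*y) - (a'*x + b'*y))" by (simp add: mod_eq_dvd_iff)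
  moreover have "(a*x + b*y) - (a'*x + b'*y) = (a-a')*x + (b-b')*y" by (simp add: algebra_simps)
  ultimately show ?thesis by simp
qed

lemma comb: "(n::int) dvd a \<Longrightarrow> n dvd b \<Longrightarrow> c*a + d*b = z \<Longrightarrow> n dvd z"
  by (metis dvd_add dvd_mult)

lemma hlp: "((h - w mod n) mod n + w) mod (n::int) = h mod n"
proof -
  have "((h - w mod n) mod n + w) mod n = (h - w mod n + w) mod n" by (simp add: mod_add_left_eq)
  also have "h - w mod n + w = h + n * (w div n)" by (simp add: minus_mod_eq_mult_div[symmetric])
  finally show ?thesis by simp
qed

lemma small_dvd: "(n::int) dvd d \<Longrightarrow> -n < d \<Longrightarrow> d < n \<Longrightarrow> d = 0"
  using dvd_imp_le_int[of d n] by (smt (verit))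

lemma pair:
  assumes m: "m \<ge> 2" and K: "finite K" "i \<in> K" "j \<in> K" "i \<noteq> j"
    and nz: "\<forall>k\<in>K. e k mod 2^m \<noteq> 0" and hK: "2^(m-1) \<notin> ssJ m e K"
    and cK: "2 * card K + 1 = 2^m - 1"
  shows "(2^m::int) dvd (e i - e j) \<or> (2^m::int) dvd (e i + e j)"
proof (rule ccontr)
  assume F56: "\<not> ?thesis"
  have m1: "m \<ge> 1" using m by simp
  have hlt: "(2^(m-1)::int) < 2^m" "(0::int) \<le> 2^(m-1)" using m1 by simp_all
  have noh: "\<not> (2^m::int) dvd (e k - 2^(m-1))" if k: "k \<in> K" for k
  proof
    assume d: "(2^m::int) dvd (e k - 2^(m-1))"
    have "K = insert k (K - {k})" using k by blast
    moreover have "(0 + 1 * e k) mod 2^m \<in> ssJ m e (insert k (K - {k}))"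
      by (rule ss_insert) (use K(1) ss_zero in auto)
    moreover have "(0 + 1 * e k) mod 2^m = 2^(m-1)"
    proof -
      have "e k mod 2^m = (2^(m-1)) mod 2^m" using d by (simp add: mod_eq_dvd_iff)
      then show ?thesis using hlt by simp
    qed
    ultimately show False using hK by simp
  qed
  have nd: "\<not> (2^m::int) dvd e k" "\<not> (2^m::int) dvd (2 * e k)" if k: "k \<in> K" for k
  proof -
    show "\<not> (2^m::int) dvd e k" using nz k by (simp add: dvd_eq_mod_eq_0)
    then show "\<not> (2^m::int) dvd (2 * e k)" using lem_two[OF m1, of "e k"] noh[OF k] by blast
  qed
  define J where "J = K - {i, j}"
  have KJ: "K = insert i (insert j J)" "i \<notin> insert j J" "j \<notin> J" "finite J"
    using K unfolding J_def by auto
  have cJ: "card J + 2 = card K" using KJ K(4) by simp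
  have hT: "2^(m-1) \<notin> ssJ m e J"
    using hK ss_mono_insert[OF KJ(4) KJ(3), of m e] ss_mono_insert[of "insert j J" i m e] KJ by auto
  have c1: "2 * card J + 1 \<le> card (ssJ m e J)" using count[OF KJ(4) m1, of e] nz hT KJ(1) by auto
  have "(2::nat)^2 \<le> 2^m" using power_increasing[OF m, of "2::nat"] by simp
  then have "(4::nat) \<le> 2^m" by simp
  then have cT: "2^m \<le> card (ssJ m e J) + 5" using c1 cJ cK by linarith
  define z where "z a b = (a * e i + b * e j) mod 2^m" for a b :: int
  define A where "A = {z a b | a b. a \<in> {-1,0,1} \<and> b \<in> {-1,0,1}}"
  define g where "g w = (2^(m-1) - w) mod (2^m::int)" for w
  have memK: "(x + a*e i + b*e j) mod 2^m \<in> ssJ m e K"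
    if x: "x \<in> ssJ m e J" and ab: "a \<in> {-1,0,1}" "b \<in> {-1,0,1}" for x a b
  proof -
    have "(x + b*e j) mod 2^m \<in> ssJ m e (insert j J)" by (rule ss_insert[OF KJ(4) KJ(3) x ab(2)])
    then have "((x + b*e j) mod 2^m + a*e i) mod 2^m \<in> ssJ m e (insert i (insert j J))"
      using ss_insert[where J="insert j J" and j=i and d=a] KJ(2,4) ab(1) by blast
    moreover have "((x + b*e j) mod 2^m + a*e i) mod 2^m = (x + a*e i + b*e j) mod 2^m"
      by (metis mod_add_left_eq add.assoc add.commute)
    ultimately show ?thesis using KJ(1) by simp
  qed
  have Asub: "A \<subseteq> {0..<2^m}" unfolding A_def z_def by auto
  have finA: "finite A" by (rule finite_subset[OF Asub]) simp
  have disj: "ssJ m e J \<inter> g ` A = {}"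
  proof (rule ccontr)
    assume "ssJ m e J \<inter> g ` A \<noteq> {}"
    then obtain x a b where x: "x \<in> ssJ m e J" "x = g (z a b)" "a \<in> {-1,0,1}" "b \<in> {-1,0,1}"
      unfolding A_def by blast
    have "(x + a*e i + b*e j) mod 2^m = ((2^(m-1) - (a*e i + b*e j) mod 2^m) mod 2^m + (a*e i + b*e j)) mod 2^m"
      using x(2) unfolding g_def z_def by (simp add: add_ac)
    also have "\<dots> = 2^(m-1)" using hlp hlt by simp
    finally show False using memK[OF x(1,3,4)] hK by simp
  qed
  have injg: "inj_on g A"
  proof
    fix w1 w2 assume w: "w1 \<in> A" "w2 \<in> A" "g w1 = g w2"
    then have "(2^m::int) dvd ((2^(m-1) - w1) - (2^(m-1) - w2))" unfolding g_def by (simp add: mod_eq_dvd_iff)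
    then have "(2^m::int) dvd (w2 - w1)" by simp
    moreover have "w1 \<in> {0..<2^m}" "w2 \<in> {0..<2^m}" using w(1,2) Asub by auto
    then have "- (2^m) < w2 - w1" "w2 - w1 < 2^m" by auto
    ultimately show "w1 = w2" using small_dvd by force
  qed
  have gsub: "g ` A \<subseteq> {0..<2^m}" unfolding g_def by auto
  have "card (ssJ m e J \<union> g ` A) \<le> card {0..<(2^m::int)}"
    by (rule card_mono) (use ss_subset gsub in auto)
  moreover have "card (ssJ m e J \<union> g ` A) = card (ssJ m e J) + card A"
    using card_Un_disjoint[OF ss_finite finite_imageI[OF finA] disj] card_image[OF injg] by simp
  ultimately have "card (ssJ m e J) + card A \<le> 2^m" by (simp add: nat_power_eq)
  with cT have cA: "card A \<le> 5" by linarith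
  let ?n = "(2^m::int)"
  have Z: "?n dvd ((a-a')*e i + (b-b')*e j)" if "z a b = z a' b'" for a b a' b'
    using that unfolding z_def by (rule zeq)
  have Fi: "\<not> ?n dvd e i" "\<not> ?n dvd (2 * e i)" using nd K(2) by auto
  have Fj: "\<not> ?n dvd e j" "\<not> ?n dvd (2 * e j)" using nd K(3) by auto
  have F5: "\<not> ?n dvd (e i - e j)" "\<not> ?n dvd (e j - e i)" "\<not> ?n dvd (e i + - e j)" "\<not> ?n dvd (- e i + e j)"
    using F56 dvd_diff_commute[of ?n "e i" "e j"] by auto
  have F6: "\<not> ?n dvd (e i + e j)" "\<not> ?n dvd (- e i - e j)" "\<not> ?n dvd (- e i + - e j)"
  proof -
    have e6: "- e i - e j = - (e i + e j)" "- e i + - e j = - (e i + e j)" by simp_all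
    have "\<not> ?n dvd (e i + e j)" using F56 by blast
    then show "\<not> ?n dvd (e i + e j)" "\<not> ?n dvd (- e i - e j)" "\<not> ?n dvd (- e i + - e j)"
      unfolding e6 dvd_minus_iff by blast+
  qed
  note F = Fi Fj F5 F6
  have d1: "z 0 0 \<noteq> z 1 0" "z 0 0 \<noteq> z (-1) 0" "z 0 0 \<noteq> z 0 1" "z 0 0 \<noteq> z 0 (-1)"
    "z 1 0 \<noteq> z (-1) 0" "z 1 0 \<noteq> z 0 1" "z 1 0 \<noteq> z 0 (-1)"
    "z (-1) 0 \<noteq> z 0 1" "z (-1) 0 \<noteq> z 0 (-1)" "z 0 1 \<noteq> z 0 (-1)"
    using F Z[of 0 0 1 0] Z[of 0 0 "-1" 0] Z[of 0 0 0 1] Z[of 0 0 0 "-1"]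
      Z[of 1 0 "-1" 0] Z[of 1 0 0 1] Z[of 1 0 0 "-1"] Z[of "-1" 0 0 1] Z[of "-1" 0 0 "-1"]
      Z[of 0 1 0 "-1"] by auto
  have inA: "z a b \<in> A" if "a \<in> {-1,0,1}" "b \<in> {-1,0,1}" for a b
    using that unfolding A_def by blast
  have big: "False" if w: "w \<in> A" "w \<notin> {z 0 0, z 1 0, z (-1) 0, z 0 1, z 0 (-1)}" for w
  proof -
    have "insert w {z 0 0, z 1 0, z (-1) 0, z 0 1, z 0 (-1)} \<subseteq> A" using w(1) inA by auto
    then have "card (insert w {z 0 0, z 1 0, z (-1) 0, z 0 1, z 0 (-1)}) \<le> card A"
      using finA card_mono by blast
    moreover have "card (insert w {z 0 0, z 1 0, z (-1) 0, z 0 1, z 0 (-1)}) = 6"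
      using w(2) d1 by simp
    ultimately show False using cA by simp
  qed
  have r5: "z 1 1 \<in> {z 0 0, z 1 0, z (-1) 0, z 0 1, z 0 (-1)}" using big inA[of 1 1] by auto
  have r6: "z 1 (-1) \<in> {z 0 0, z 1 0, z (-1) 0, z 0 1, z 0 (-1)}" using big inA[of 1 "-1"] by auto
  have D12: "?n dvd (2*e i + e j) \<or> ?n dvd (e i + 2*e j)"
    using r5 F Z[of 1 1 0 0] Z[of 1 1 1 0] Z[of 1 1 "-1" 0] Z[of 1 1 0 1] Z[of 1 1 0 "-1"] by auto
  have D34: "?n dvd (2*e i - e j) \<or> ?n dvd (e i - 2*e j)"
    using r6 F Z[of 1 "-1" 0 0] Z[of 1 "-1" 1 0] Z[of 1 "-1" "-1" 0] Z[of 1 "-1" 0 1] Z[of 1 "-1" 0 "-1"] by auto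
  show False
    using D12 D34
  proof (elim disjE)
    assume a: "?n dvd (2*e i + e j)" "?n dvd (2*e i - e j)"
    have "?n dvd 2*(2*e i)" by (rule comb[OF a, of 1 1]) simp
    then have "?n dvd (2*e i - 2^(m-1))" using lem_two[OF m1, of "2*e i"] Fi by blast
    then have "?n dvd (e j - 2^(m-1))" by (rule comb[OF a(2), where c="-1" and d=1]) simp
    then show False using noh K(3) by blast
  next
    assume a: "?n dvd (2*e i + e j)" "?n dvd (e i - 2*e j)"
    have "?n dvd 5*e i" by (rule comb[OF a, of 2 1]) simp
    then show False using five Fi by blast
  next
    assume a: "?n dvd (e i + 2*e j)" "?n dvd (2*e i - e j)"
    have "?n dvd 5*e j" by (rule comb[OF a, of 2 "-1"]) simp
    then show False using five Fj by blast
  next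
    assume a: "?n dvd (e i + 2*e j)" "?n dvd (e i - 2*e j)"
    have "?n dvd 2*(2*e j)" by (rule comb[OF a, of 1 "-1"]) simp
    then have "?n dvd (2*e j - 2^(m-1))" using lem_two[OF m1, of "2*e j"] Fj by blast
    then have "?n dvd (e i - 2^(m-1))" by (rule comb[OF a(2), where c=1 and d=1]) simp
    then show False using noh K(2) by blast
  qed
qed

theorem lemma2p4:
  fixes m t :: nat and e :: "nat \<Rightarrow> int"
  assumes "m \<ge> 1"
    and "\<forall>j\<in>{1..t}. e j mod 2^m \<noteq> 0"
  shows "(t \<ge> 2^(m-1) \<longrightarrow> 2^(m-1) \<in> signed_sums m t e)
    \<and> (t = 2^(m-1) - 1 \<longrightarrow>
         (2^(m-1) \<notin> signed_sums m t e \<longleftrightarrow>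
           (\<exists>u::int. coprime u (2^m) \<and>
              (\<forall>j\<in>{1..t}. [e j = u] (mod 2^m) \<or> [e j = - u] (mod 2^m)))))"
proof -
  have m1: "m \<ge> 1" by (rule assms(1))
  have S: "signed_sums m t e = ssJ m e {1..t}" unfolding signed_sums_def ssJ_def by simp
  have nz: "\<forall>j\<in>{1..t}. e j mod 2^m \<noteq> 0" by (rule assms(2))
  have pw: "(2::nat) * 2^(m-1) = 2^m" using m1 by (cases m) auto
  have pwi: "(2::int) * 2^(m-1) = 2^m" using m1 by (cases m) auto
  have hlt_x: "(2::int)^(m-1) < 2^m" "(0::int) < 2^(m-1)" using m1 by (cases m, auto)+
  have cardU: "card ({0..<2^m}::int set) = 2^m" by (simp add: nat_power_eq)
  have cS: "card (ssJ m e {1..t}) \<le> 2^m"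
    using card_mono[OF _ ss_subset, of m e "{1..t}"] cardU by (simp add: nat_power_eq)
  have part1: "t \<ge> 2^(m-1) \<longrightarrow> 2^(m-1) \<in> signed_sums m t e"
  proof
    assume t: "2^(m-1) \<le> t"
    show "2^(m-1) \<in> signed_sums m t e"
    proof (rule ccontr)
      assume "2^(m-1) \<notin> signed_sums m t e"
      then have "2 * card {1..t} + 1 \<le> card (ssJ m e {1..t})"
        using count[of "{1..t}" m e] m1 nz S by simp
      then show False using cS t pw by simp
    qed
  qed
  have part2: "t = 2^(m-1) - 1 \<longrightarrow>
         (2^(m-1) \<notin> signed_sums m t e \<longleftrightarrow>
           (\<exists>u::int. coprime u (2^m) \<and>
              (\<forall>j\<in>{1..t}. [e j = u] (mod 2^m) \<or> [e j = - u] (mod 2^m))))"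
  proof
    assume t: "t = 2^(m-1) - 1"
    show "2^(m-1) \<notin> signed_sums m t e \<longleftrightarrow>
           (\<exists>u::int. coprime u (2^m) \<and>
              (\<forall>j\<in>{1..t}. [e j = u] (mod 2^m) \<or> [e j = - u] (mod 2^m)))"
    proof
      assume hS: "2^(m-1) \<notin> signed_sums m t e"
      show "\<exists>u::int. coprime u (2^m) \<and>
              (\<forall>j\<in>{1..t}. [e j = u] (mod 2^m) \<or> [e j = - u] (mod 2^m))"
      proof (cases "m = 1")
        case True
        then have "t = 0" using t by simp
        then show ?thesis by (intro exI[of _ 1]) simp
      next
        case False
        then have m2: "m \<ge> 2" using m1 by simp
        have "(2::nat)^1 \<le> 2^(m-1)" using m2 by (intro power_increasing) auto
        then have t1: "1 \<le> t" using t by simp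
        have hK: "2^(m-1) \<notin> ssJ m e {1..t}" using hS S by simp
        have cK: "2 * card {1..t} + 1 = 2^m - 1" using t pw t1 by simp
        have pr: "(2^m::int) dvd (e j - e 1) \<or> (2^m::int) dvd (e j + e 1)"
          if j: "j \<in> {1..t}" "j \<noteq> 1" for j
        proof -
          have "1 \<in> {1..t}" using t1 by simp
          from pair[OF m2 finite_atLeastAtMost j(1) this j(2) nz hK cK] show ?thesis .
        qed
        have c2: "2 * card {1..t} + 1 \<le> card (ssJ m e {1..t})"
          using count[of "{1..t}" m e] m1 nz hK by simp
        have full: "ssJ m e {1..t} = {0..<2^m} - {2^(m-1)}"
        proof (rule card_subset_eq)
          show "finite ({0..<2^m} - {(2::int)^(m-1)})" by simp
          show "ssJ m e {1..t} \<subseteq> {0..<2^m} - {2^(m-1)}" using ss_subset hK by blast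
          have "m - 1 < m" using m1 by arith
          then have "(2::int)^(m-1) < 2^m" by simp
          then have "(2::int)^(m-1) \<in> {0..<2^m}" by simp
          then have cU: "card ({0..<2^m} - {(2::int)^(m-1)}) = 2^m - 1"
            using cardU by (simp add: card_Diff_singleton nat_power_eq)
          have "card (ssJ m e {1..t}) \<le> card ({0..<2^m} - {(2::int)^(m-1)})"
            by (rule card_mono) (use ss_subset hK in auto)
          then show "card (ssJ m e {1..t}) = card ({0..<2^m} - {(2::int)^(m-1)})"
            using c2 cK cU by linarith
        qed
        have "(2::int)^1 \<le> 2^(m-1)" using m2 by (intro power_increasing) auto
        moreover have "(2::int)^(m-1) < 2^m" using m1 by (cases m) auto
        ultimately have "(1::int) \<in> {0..<2^m} - {2^(m-1)}" by auto
        then have one: "1 \<in> ssJ m e {1..t}" using full by simp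
        have odd1: "odd (e 1)"
        proof
          assume ev: "even (e 1)"
          have "2 dvd (2^m::int)" using m1 by simp
          note two = this
          have evj: "even (e j)" if jj: "j \<in> {1..t}" for j
          proof (cases "j = 1")
            case True then show ?thesis using ev by simp
          next
            case False
            then have "2 dvd (e j - e 1) \<or> 2 dvd (e j + e 1)"
              using pr[OF jj] dvd_trans[OF two] by blast
            then show ?thesis using ev by auto
          qed
          obtain \<delta> where "(1::int) = (\<Sum>j\<in>{1..t}. \<delta> j * e j) mod 2^m"
            using one unfolding ssJ_def by blast
          moreover have "even (\<Sum>j\<in>{1..t}. \<delta> j * e j)" using evj by (auto intro: dvd_sum)
          then have "even ((\<Sum>j\<in>{1..t}. \<delta> j * e j) mod 2^m)" using two by (rule dvd_mod)
          ultimately show False by simp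
        qed
        show ?thesis
        proof (intro exI[of _ "e 1"] conjI ballI)
          show "coprime (e 1) (2^m)" using odd1 m1 by simp
          fix j assume j: "j \<in> {1..t}"
          show "[e j = e 1] (mod 2^m) \<or> [e j = - e 1] (mod 2^m)"
          proof (cases "j = 1")
            case True then show ?thesis by simp
          next
            case False then show ?thesis using pr[OF j] by (simp add: cong_iff_dvd_diff)
          qed
        qed
      qed
    next
      assume "\<exists>u::int. coprime u (2^m) \<and>
              (\<forall>j\<in>{1..t}. [e j = u] (mod 2^m) \<or> [e j = - u] (mod 2^m))"
      then obtain u where u: "coprime u (2^m)"
        "\<forall>j\<in>{1..t}. [e j = u] (mod 2^m) \<or> [e j = - u] (mod 2^m)" by blast
      show "2^(m-1) \<notin> signed_sums m t e"
      proof
        assume "2^(m-1) \<in> signed_sums m t e"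
        then obtain \<delta> where d: "(2::int)^(m-1) = (\<Sum>j\<in>{1..t}. \<delta> j * e j) mod 2^m"
          "\<forall>j\<in>{1..t}. \<delta> j \<in> {-1,0,1}" unfolding S ssJ_def by blast
        define s where "s j = (if [e j = u] (mod 2^m) then 1 else (-1::int))" for j
        have sj: "[e j = s j * u] (mod 2^m)" "\<bar>s j\<bar> = 1" if "j \<in> {1..t}" for j
          using u(2) that unfolding s_def by auto
        define X where "X = (\<Sum>j\<in>{1..t}. \<delta> j * s j)"
        have "[(\<Sum>j\<in>{1..t}. \<delta> j * e j) = (\<Sum>j\<in>{1..t}. \<delta> j * (s j * u))] (mod 2^m)"
          by (rule cong_sum) (use sj in \<open>auto intro: cong_mult\<close>)
        moreover have "(\<Sum>j\<in>{1..t}. \<delta> j * (s j * u)) = X * u"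
          unfolding X_def by (simp add: sum_distrib_right mult.assoc)
        ultimately have "(X * u) mod 2^m = 2^(m-1)" using d(1) by (simp add: cong_def)
        then have "(X * u) mod 2^m = (2^(m-1)) mod 2^m" using hlt_x by simp
        then have dv: "(2^m::int) dvd (X*u - 2^(m-1))" by (simp add: mod_eq_dvd_iff)
        have "\<bar>X\<bar> \<le> (\<Sum>j\<in>{1..t}. \<bar>\<delta> j * s j\<bar>)" unfolding X_def by (rule sum_abs)
        also have "\<dots> \<le> (\<Sum>j\<in>{1..t}. 1)"
        proof (rule sum_mono)
          fix j assume jj: "j \<in> {1..t}"
          then have "\<bar>\<delta> j\<bar> \<le> 1" using d(2) by fastforce
          then show "\<bar>\<delta> j * s j\<bar> \<le> 1" using sj(2)[OF jj] by (simp add: abs_mult)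
        qed
        finally have Xt: "\<bar>X\<bar> \<le> int t" by simp
        have "int t = 2^(m-1) - 1" using t hlt_x(2)
          by (metis Suc_leI diff_less of_nat_1 of_nat_diff of_nat_numeral of_nat_power one_le_numeral one_le_power zero_less_one)
        with Xt have Xb: "- (2^(m-1)) < X" "X < 2^(m-1)" by linarith+
        have "(2::int)^(m-1) dvd 2^m" using pwi by (metis dvd_triv_right)
        then have "(2::int)^(m-1) dvd (X*u - 2^(m-1))" using dv by (rule dvd_trans)
        then have "(2::int)^(m-1) dvd (X*u - 2^(m-1) + 2^(m-1))" by (rule dvd_add) simp
        then have d2: "(2::int)^(m-1) dvd X*u" by simp
        have "coprime u 2" using u(1) m1 by (simp add: coprime_power_right_iff)
        then have "coprime ((2::int)^(m-1)) u" by (simp add: coprime_commute)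
        then have "(2::int)^(m-1) dvd X" using d2 by (simp add: coprime_dvd_mult_left_iff)
        then have "X = 0" using Xb by (rule small_dvd)
        then have "(2^m::int) dvd (- (2^(m-1)))" using dv by simp
        moreover have "- (2^m::int) < - (2^(m-1))" "- (2^(m-1)) < (2^m::int)" using hlt_x by linarith+
        ultimately have "- (2^(m-1)) = (0::int)" by (rule small_dvd)
        then show False using hlt_x by simp
      qed
    qed
  qed
  show ?thesis using part1 part2 by blast
qed

end
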